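(* Let $R$ be an $n\times n$ irreducible nonnegative matrix with positive left and right eigenvectors $u$ and $v$ for the PF eigenvalue $1$. Then for every positive integer $k$, \[ \phi(R^k)\le k\cdot\phi(R). \]
   Context: For a nonnegative matrix $M$ with $Mv=v$ and $M^Tu=u$ (this holds for $M=R^k$), define $\phi_S(M)=\langle\mathbf 1_S,D_uMD_v\mathbf 1_{\overline S}\rangle/\langle\mathbf 1_S,D_uMD_v\mathbf 1\rangle$ and $\phi(M)=\min\phi_S(M)$ over nonempty $S\subseteq[n]$ with $\sum_{i\in S}u_iv_i\le\frac12\sum_iu_iv_i$; here $D_x$ is the diagonal matrix with $x$ on its diagonal and $\mathbf 1_S$ the indicator vector of $S$. *)

theory Defs
  imports "HOL-Analysis.Analysis"
begin

primrec matpow :: "real^'n^'n \<Rightarrow> nat \<Rightarrow> real^'n^'n" where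
  "matpow A 0 = mat 1"
| "matpow A (Suc m) = matpow A m ** A"

definition nonneg_matrix :: "real^'n^'n \<Rightarrow> bool" where
  "nonneg_matrix A \<longleftrightarrow> (\<forall>i j. A $ i $ j \<ge> 0)"

text \<open>Irreducible: the directed graph with an edge i -> j iff A i j > 0 is strongly
  connected, i.e. for all i j there is a path of positive length from i to j.\<close>
definition irreducible_matrix :: "real^'n^'n \<Rightarrow> bool" where
  "irreducible_matrix A \<longleftrightarrow> (\<forall>i j. \<exists>k>0. matpow A k $ i $ j > 0)"

definition phi_set :: "real^'n^'n \<Rightarrow> real^'n \<Rightarrow> real^'n \<Rightarrow> 'n set \<Rightarrow> real" where
  "phi_set M u v S =
     (\<Sum>i\<in>S. \<Sum>j\<in>- S. u $ i * M $ i $ j * v $ j) /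
     (\<Sum>i\<in>S. \<Sum>j\<in>UNIV. u $ i * M $ i $ j * v $ j)"

definition admissible_sets :: "real^'n \<Rightarrow> real^'n \<Rightarrow> 'n set set" where
  "admissible_sets u v =
     {S. S \<noteq> {} \<and> (\<Sum>i\<in>S. u $ i * v $ i) \<le> (\<Sum>i\<in>UNIV. u $ i * v $ i) / 2}"

definition phi :: "real^'n^'n \<Rightarrow> real^'n \<Rightarrow> real^'n \<Rightarrow> real" where
  "phi M u v = Min (phi_set M u v ` admissible_sets u v)"

end

theory Submission
  imports Defs
begin

definition NN :: "real^'n^'n \<Rightarrow> real^'n \<Rightarrow> real^'n \<Rightarrow> 'n set \<Rightarrow> real" where
  "NN M u v S = (\<Sum>i\<in>S. \<Sum>j\<in>- S. u $ i * M $ i $ j * v $ j)"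

lemma matpow_nonneg: "nonneg_matrix R \<Longrightarrow> nonneg_matrix (matpow R k)"
proof (induction k)
  case 0 then show ?case by (simp add: nonneg_matrix_def mat_def)
next
  case (Suc k) then show ?case
    by (auto simp: nonneg_matrix_def matrix_matrix_mult_def intro!: sum_nonneg mult_nonneg_nonneg)
qed

lemma matpow_right: "R *v v = v \<Longrightarrow> matpow R k *v v = v"
proof (induction k)
  case 0 then show ?case by (simp add: matrix_vector_mul_lid)
next
  case (Suc k)
  have "matpow R (Suc k) *v v = matpow R k *v (R *v v)"
    by (simp only: matpow.simps matrix_vector_mul_assoc)
  then show ?case using Suc by simp
qed

lemma matpow_left: "transpose R *v u = u \<Longrightarrow> transpose (matpow R k) *v u = u"
proof (induction k)
  case 0 then show ?case by (simp add: transpose_mat matrix_vector_mul_lid)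
next
  case (Suc k)
  have "transpose (matpow R (Suc k)) *v u = transpose R *v (transpose (matpow R k) *v u)"
    by (simp only: matpow.simps matrix_transpose_mul matrix_vector_mul_assoc)
  then show ?case using Suc by simp
qed

lemma row_cond: fixes M :: "real^'n^'n" shows "M *v v = v \<Longrightarrow> (\<Sum>j\<in>UNIV. M $ l $ j * v $ j) = v $ l"
proof -
  assume h: "M *v v = v"
  have "(M *v v) $ l = (\<Sum>j\<in>UNIV. M $ l $ j * v $ j)"
    by (simp add: matrix_vector_mult_def)
  then show ?thesis using h by simp
qed

lemma col_cond: fixes M :: "real^'n^'n" shows "transpose M *v u = u \<Longrightarrow> (\<Sum>i\<in>UNIV. u $ i * M $ i $ l) = u $ l"
proof -
  assume h: "transpose M *v u = u"
  have "(transpose M *v u) $ l = (\<Sum>i\<in>UNIV. M $ i $ l * u $ i)"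
    by (simp add: matrix_vector_mult_def transpose_def)
  then show ?thesis using h by (simp add: mult.commute)
qed

lemma key:
  fixes A B :: "real^'n^'n" and u v :: "real^'n"
  assumes nA: "nonneg_matrix A" and nB: "nonneg_matrix B"
    and u0: "\<forall>i. u $ i \<ge> 0" and v0: "\<forall>i. v $ i \<ge> 0"
    and cA: "\<And>l. (\<Sum>i\<in>UNIV. u $ i * A $ i $ l) = u $ l"
    and rB: "\<And>l. (\<Sum>j\<in>UNIV. B $ l $ j * v $ j) = v $ l"
  shows "NN (A ** B) u v S \<le> NN A u v S + NN B u v S"
proof -
  define g where "g i j l = u $ i * A $ i $ l * B $ l $ j * v $ j" for i j l
  have gnn: "g i j l \<ge> 0" for i j l
    using nA nB u0 v0 unfolding g_def nonneg_matrix_def by simp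
  have split: "(\<Sum>l\<in>UNIV. g i j l) = (\<Sum>l\<in>S. g i j l) + (\<Sum>l\<in>-S. g i j l)" for i j
  proof -
    have "UNIV = S \<union> -S" by auto
    then have "(\<Sum>l\<in>UNIV. g i j l) = (\<Sum>l\<in>S \<union> -S. g i j l)" by simp
    also have "\<dots> = (\<Sum>l\<in>S. g i j l) + (\<Sum>l\<in>-S. g i j l)"
      by (rule sum.union_disjoint) auto
    finally show ?thesis .
  qed
  have e: "u $ i * (A ** B) $ i $ j * v $ j = (\<Sum>l\<in>UNIV. g i j l)" for i j
    by (simp add: matrix_matrix_mult_def g_def sum_distrib_left sum_distrib_right mult.assoc)
  have "NN (A ** B) u v S = (\<Sum>i\<in>S. \<Sum>j\<in>-S. \<Sum>l\<in>S. g i j l) + (\<Sum>i\<in>S. \<Sum>j\<in>-S. \<Sum>l\<in>-S. g i j l)"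
    unfolding NN_def e split by (simp add: sum.distrib)
  moreover have "(\<Sum>i\<in>S. \<Sum>j\<in>-S. \<Sum>l\<in>S. g i j l) \<le> NN B u v S"
  proof -
    have "(\<Sum>i\<in>S. \<Sum>j\<in>-S. \<Sum>l\<in>S. g i j l) = (\<Sum>i\<in>S. \<Sum>l\<in>S. \<Sum>j\<in>-S. g i j l)"
      by (rule sum.cong[OF refl], rule sum.swap)
    also have "\<dots> = (\<Sum>l\<in>S. \<Sum>i\<in>S. \<Sum>j\<in>-S. g i j l)" by (rule sum.swap)
    also have "\<dots> = (\<Sum>l\<in>S. \<Sum>j\<in>-S. \<Sum>i\<in>S. g i j l)"
      by (rule sum.cong[OF refl], rule sum.swap)
    also have "\<dots> \<le> (\<Sum>l\<in>S. \<Sum>j\<in>-S. u $ l * B $ l $ j * v $ j)"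
    proof (rule sum_mono, rule sum_mono)
      fix l j
      have "(\<Sum>i\<in>S. g i j l) = (\<Sum>i\<in>S. u $ i * A $ i $ l) * (B $ l $ j * v $ j)"
        by (simp add: g_def sum_distrib_right mult.assoc)
      also have "\<dots> \<le> (\<Sum>i\<in>UNIV. u $ i * A $ i $ l) * (B $ l $ j * v $ j)"
        apply (rule mult_right_mono)
        apply (rule sum_mono2)
        using nA nB u0 v0 unfolding nonneg_matrix_def by auto
      also have "\<dots> = u $ l * B $ l $ j * v $ j" by (simp add: cA mult.assoc)
      finally show "(\<Sum>i\<in>S. g i j l) \<le> u $ l * B $ l $ j * v $ j" .
    qed
    finally show ?thesis unfolding NN_def .
  qed
  moreover have "(\<Sum>i\<in>S. \<Sum>j\<in>-S. \<Sum>l\<in>-S. g i j l) \<le> NN A u v S"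
  proof -
    have "(\<Sum>i\<in>S. \<Sum>j\<in>-S. \<Sum>l\<in>-S. g i j l) = (\<Sum>i\<in>S. \<Sum>l\<in>-S. \<Sum>j\<in>-S. g i j l)"
      by (rule sum.cong[OF refl], rule sum.swap)
    also have "\<dots> \<le> (\<Sum>i\<in>S. \<Sum>l\<in>-S. u $ i * A $ i $ l * v $ l)"
    proof (rule sum_mono, rule sum_mono)
      fix i l
      have "(\<Sum>j\<in>-S. g i j l) = (u $ i * A $ i $ l) * (\<Sum>j\<in>-S. B $ l $ j * v $ j)"
        by (simp add: g_def sum_distrib_left mult.assoc)
      also have "\<dots> \<le> (u $ i * A $ i $ l) * (\<Sum>j\<in>UNIV. B $ l $ j * v $ j)"
        apply (rule mult_left_mono)
        apply (rule sum_mono2)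
        using nA nB u0 v0 unfolding nonneg_matrix_def by auto
      also have "\<dots> = u $ i * A $ i $ l * v $ l" by (simp add: rB)
      finally show "(\<Sum>j\<in>-S. g i j l) \<le> u $ i * A $ i $ l * v $ l" .
    qed
    finally show ?thesis unfolding NN_def .
  qed
  ultimately show ?thesis by linarith
qed

lemma NN_pow:
  fixes R :: "real^'n^'n" and u v :: "real^'n"
  assumes nR: "nonneg_matrix R" and u0: "\<forall>i. u $ i \<ge> 0" and v0: "\<forall>i. v $ i \<ge> 0"
    and rv: "R *v v = v" and lu: "transpose R *v u = u"
  shows "NN (matpow R k) u v S \<le> real k * NN R u v S"
proof (induction k)
  case 0
  have "NN (mat 1) u v S = 0" unfolding NN_def
    by (rule sum.neutral) (auto simp: mat_def intro!: sum.neutral)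
  then show ?case by simp
next
  case (Suc k)
  have "NN (matpow R (Suc k)) u v S \<le> NN (matpow R k) u v S + NN R u v S"
    unfolding matpow.simps
    apply (rule key[OF matpow_nonneg[OF nR] nR u0 v0])
     apply (rule col_cond[OF matpow_left[OF lu]])
    by (rule row_cond[OF rv])
  then show ?case using Suc by (simp add: algebra_simps)
qed

lemma denom:
  fixes M :: "real^'n^'n" and u v :: "real^'n"
  assumes "M *v v = v"
  shows "(\<Sum>i\<in>S. \<Sum>j\<in>UNIV. u $ i * M $ i $ j * v $ j) = (\<Sum>i\<in>S. u $ i * v $ i)"
proof (rule sum.cong[OF refl])
  fix i
  have "(\<Sum>j\<in>UNIV. u $ i * M $ i $ j * v $ j) = u $ i * (\<Sum>j\<in>UNIV. M $ i $ j * v $ j)"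
    by (simp add: sum_distrib_left mult.assoc)
  then show "(\<Sum>j\<in>UNIV. u $ i * M $ i $ j * v $ j) = u $ i * v $ i"
    using row_cond[OF assms] by simp
qed

theorem lemma3p13:
  fixes R :: "real^'n^'n" and u v :: "real^'n" and k :: nat
  assumes "CARD('n) \<ge> 2"
    and "nonneg_matrix R"
    and "irreducible_matrix R"
    and "\<forall>i. u $ i > 0" and "\<forall>i. v $ i > 0"
    and "R *v v = v" and "transpose R *v u = u"
    and "k \<ge> 1"
  shows "phi (matpow R k) u v \<le> real k * phi R u v"
proof -
  have u0: "\<forall>i. u $ i \<ge> 0" and v0: "\<forall>i. v $ i \<ge> 0" using assms(4,5) by (auto simp: less_imp_le)
  have fin: "finite (admissible_sets u v)" by simp
  obtain a b :: 'n where ab: "a \<noteq> b"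
  proof -
    have "\<not> (\<forall>a b :: 'n. a = b)"
    proof
      assume "\<forall>a b :: 'n. a = b"
      then have "card (UNIV :: 'n set) \<le> 1" by (simp add: card_le_Suc0_iff_eq)
      then show False using assms(1) by simp
    qed
    then show ?thesis using that by blast
  qed
  have tot: "(\<Sum>i\<in>{a,b}. u $ i * v $ i) \<le> (\<Sum>i\<in>UNIV. u $ i * v $ i)"
    by (rule sum_mono2) (use u0 v0 in auto)
  have ne: "admissible_sets u v \<noteq> {}"
  proof (cases "u $ a * v $ a \<le> u $ b * v $ b")
    case True
    then have "{a} \<in> admissible_sets u v" using tot ab by (simp add: admissible_sets_def)
    then show ?thesis by blast
  next
    case False
    then have "{b} \<in> admissible_sets u v" using tot ab by (simp add: admissible_sets_def)
    then show ?thesis by blast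
  qed
  have "phi R u v \<in> phi_set R u v ` admissible_sets u v"
    unfolding phi_def by (rule Min_in) (use fin ne in auto)
  then obtain S where S: "S \<in> admissible_sets u v" and pS: "phi R u v = phi_set R u v S" by blast
  have Sne: "S \<noteq> {}" using S by (simp add: admissible_sets_def)
  have pos: "(\<Sum>i\<in>S. u $ i * v $ i) > 0"
    using Sne assms(4,5) by (intro sum_pos) auto
  have "phi (matpow R k) u v \<le> phi_set (matpow R k) u v S"
    unfolding phi_def by (rule Min_le) (use fin S in auto)
  also have "\<dots> = NN (matpow R k) u v S / (\<Sum>i\<in>S. u $ i * v $ i)"
    unfolding phi_set_def NN_def denom[OF matpow_right[OF assms(6)]] ..
  also have "\<dots> \<le> real k * NN R u v S / (\<Sum>i\<in>S. u $ i * v $ i)"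
    by (rule divide_right_mono[OF NN_pow[OF assms(2) u0 v0 assms(6,7)]]) (use pos in simp)
  also have "\<dots> = real k * phi_set R u v S"
    unfolding phi_set_def NN_def denom[OF assms(6)] by simp
  finally show ?thesis using pS by simp
qed

end
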